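(* Let $1\leq n<\omega$ and let $\kappa$ be a cardinal with $\Theta_n>\kappa$. Then $\Theta_{n+1}>\kappa^+$.
   Context: For $1\leq n<\omega$, $\Theta_n$ is the least cardinal $\theta$ such that for every function $f:\theta^n\to\omega$ there is a sequence $\langle A_i\mid i<n\rangle$ of infinite subsets of $\theta$ such that $f\restriction\prod_{i<n}A_i$ is constant. (Here $\theta^n$ is the set of all $n$-tuples from $\theta$.) *)

theory Defs
  imports Main
begin

text \<open>The partition property whose least witness is Theta_n: a set A (of size theta)
  has it iff for every f : A^n \<rightarrow> omega there are infinite subsets A_0..A_{n-1} of A
  with f constant on their product.  n-tuples are lists of length n.\<close>

definition theta_prop :: "nat \<Rightarrow> 'a set \<Rightarrow> bool" where
  "theta_prop n A \<longleftrightarrow>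
     (\<forall>f :: 'a list \<Rightarrow> nat.
        \<exists>As :: nat \<Rightarrow> 'a set.
          (\<forall>i<n. As i \<subseteq> A \<and> infinite (As i)) \<and>
          (\<exists>c. \<forall>xs. length xs = n \<and> (\<forall>i<n. xs ! i \<in> As i) \<longrightarrow> f xs = c))"

text \<open>"Theta_n > kappa" (kappa = |K|): no cardinal theta \<le> kappa has the property,
  i.e. the least cardinal with the property (if any) exceeds kappa.\<close>

definition Theta_gt :: "nat \<Rightarrow> 'a set \<Rightarrow> bool" where
  "Theta_gt n K \<longleftrightarrow> (\<forall>X :: 'a set. (card_of X, card_of K) \<in> ordLeq \<longrightarrow> \<not> theta_prop n X)"

text \<open>"Theta_n > kappa^+", with the sets of size \<le> kappa^+ taken in an arbitrary type 'b.\<close>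

definition Theta_gt_suc :: "nat \<Rightarrow> 'a set \<Rightarrow> 'b itself \<Rightarrow> bool" where
  "Theta_gt_suc n K _ \<longleftrightarrow>
     (\<forall>Y :: 'b set. (card_of Y, cardSuc (card_of K)) \<in> ordLeq \<longrightarrow> \<not> theta_prop n Y)"

end

theory Submission
  imports Defs
begin

unbundle cardinal_syntax

lemma transfer_theta:
  assumes inj: "inj_on h A" and nt: "\<not> theta_prop n (h ` A)"
  shows "\<not> theta_prop n A"
proof
  assume tp: "theta_prop n A"
  from nt obtain f :: "'b list \<Rightarrow> nat" where
    hf: "\<And>As. (\<forall>i<n. As i \<subseteq> h ` A \<and> infinite (As i)) \<Longrightarrow>
          \<not> (\<exists>c. \<forall>xs. length xs = n \<and> (\<forall>i<n. xs ! i \<in> As i) \<longrightarrow> f xs = c)"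
    unfolding theta_prop_def by blast
  from tp obtain As c where As: "\<forall>i<n. As i \<subseteq> A \<and> infinite (As i)"
    and c: "\<forall>xs. length xs = n \<and> (\<forall>i<n. xs ! i \<in> As i) \<longrightarrow> f (map h xs) = c"
    using tp[unfolded theta_prop_def, rule_format, of "\<lambda>xs. f (map h xs)"] by blast
  have h1: "\<forall>i<n. h ` As i \<subseteq> h ` A \<and> infinite (h ` As i)"
  proof (intro allI impI conjI)
    fix i assume "i < n"
    then show "h ` As i \<subseteq> h ` A" using As by blast
    have "inj_on h (As i)" using As \<open>i < n\<close> inj inj_on_subset by blast
    then show "infinite (h ` As i)" using As \<open>i < n\<close> by (simp add: finite_image_iff)
  qed
  have h2: "\<forall>xs. length xs = n \<and> (\<forall>i<n. xs ! i \<in> h ` As i) \<longrightarrow> f xs = c"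
  proof (intro allI impI)
    fix xs :: "'b list" assume a: "length xs = n \<and> (\<forall>i<n. xs ! i \<in> h ` As i)"
    define ys where "ys = map (inv_into A h) xs"
    have y1: "length ys = n" using a ys_def by simp
    have y2: "\<forall>i<n. ys ! i \<in> As i"
    proof (intro allI impI)
      fix i assume "i < n"
      then obtain x where x: "x \<in> As i" "xs ! i = h x" using a by blast
      then have "x \<in> A" using As \<open>i < n\<close> by blast
      then show "ys ! i \<in> As i" using x a \<open>i<n\<close> inj by (simp add: ys_def)
    qed
    have "map h ys = xs"
    proof (rule nth_equalityI)
      show "length (map h ys) = length xs" using a y1 by simp
      fix i assume "i < length (map h ys)"
      then have "i < n" using y1 by simp
      then obtain x where x: "x \<in> As i" "xs ! i = h x" using a by blast
      then have "x \<in> A" using As \<open>i < n\<close> by blast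
      then show "map h ys ! i = xs ! i" using x \<open>i<n\<close> a inj by (simp add: ys_def)
    qed
    have "f (map h ys) = c" using c y1 y2 by blast
    then show "f xs = c" using \<open>map h ys = xs\<close> by simp
  qed
  show False using hf[of "\<lambda>i. h ` As i"] h1 h2 by blast
qed

lemma wo_max:
  assumes wo: "wo_rel r" and fin: "finite S"
  shows "S \<noteq> {} \<Longrightarrow> S \<subseteq> Field r \<Longrightarrow> \<exists>m\<in>S. \<forall>x\<in>S. (x, m) \<in> r"
  using fin
proof (induction S rule: finite_induct)
  case empty then show ?case by simp
next
  case (insert a F)
  show ?case
  proof (cases "F = {}")
    case True
    then show ?thesis using insert wo_rel.REFL[OF wo] by (auto simp: refl_on_def)
  next
    case False
    then obtain m where m: "m \<in> F" "\<forall>x\<in>F. (x, m) \<in> r" using insert by auto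
    have aF: "a \<in> Field r" "m \<in> Field r" using insert m by auto
    have g: "(a, wo_rel.max2 r a m) \<in> r" "(m, wo_rel.max2 r a m) \<in> r"
      "wo_rel.max2 r a m \<in> {a, m}"
      using wo_rel.max2_greater_among[OF wo aF] by auto
    have "\<forall>x\<in>insert a F. (x, wo_rel.max2 r a m) \<in> r"
    proof
      fix x assume "x \<in> insert a F"
      then show "(x, wo_rel.max2 r a m) \<in> r"
      proof
        assume "x = a" then show ?thesis using g by simp
      next
        assume "x \<in> F"
        then have "(x, m) \<in> r" using m by auto
        then show ?thesis using g wo_rel.TRANS[OF wo] unfolding trans_def by blast
      qed
    qed
    then show ?thesis using g m by auto
  qed
qed

theorem proposition5p2:
  fixes n :: nat and K :: "'a set"
  assumes "1 \<le> n"
    and "Theta_gt n K"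
  shows "Theta_gt_suc (Suc n) K TYPE('b)"
  unfolding Theta_gt_suc_def
proof (intro allI impI)
  fix Y :: "'b set"
  assume Yle: "( |Y|, cardSuc |K| ) \<in> ordLeq"
  define r where "r = |Y|"
  have Cr: "Card_order r" unfolding r_def by (rule card_of_Card_order)
  have wo: "wo_rel r" using Cr unfolding wo_rel_def card_order_on_def by blast
  have Fr: "Field r = Y" unfolding r_def by (rule Field_card_of)
  have ex: "\<forall>b\<in>Y. \<exists>F :: 'b list \<Rightarrow> nat. \<forall>As. (\<forall>i<n. As i \<subseteq> underS r b \<and> infinite (As i)) \<longrightarrow>
          \<not> (\<exists>c. \<forall>xs. length xs = n \<and> (\<forall>i<n. xs ! i \<in> As i) \<longrightarrow> F xs = c)"
  proof
    fix b assume "b \<in> Y"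
    have "|underS r b| <o r" using card_of_underS[OF Cr] \<open>b \<in> Y\<close> Fr by blast
    then have "|underS r b| <o cardSuc |K|" using Yle r_def ordLess_ordLeq_trans by blast
    then have "|underS r b| \<le>o |K|"
      by (rule cardSuc_ordLeq_ordLess[OF card_of_Card_order card_of_Card_order, THEN iffD1])
    then obtain h where h: "inj_on h (underS r b)" "h ` underS r b \<subseteq> K"
      using card_of_ordLeq[THEN iffD2] by blast
    have "\<not> theta_prop n (h ` underS r b)"
      using assms(2) h(2) card_of_mono1 unfolding Theta_gt_def by blast
    then have "\<not> theta_prop n (underS r b)" using transfer_theta h(1) by blast
    then show "\<exists>F :: 'b list \<Rightarrow> nat. \<forall>As. (\<forall>i<n. As i \<subseteq> underS r b \<and> infinite (As i)) \<longrightarrow>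
          \<not> (\<exists>c. \<forall>xs. length xs = n \<and> (\<forall>i<n. xs ! i \<in> As i) \<longrightarrow> F xs = c)"
      unfolding theta_prop_def by blast
  qed
  then obtain F :: "'b \<Rightarrow> 'b list \<Rightarrow> nat" where F: "\<forall>b\<in>Y. \<forall>As. (\<forall>i<n. As i \<subseteq> underS r b \<and> infinite (As i)) \<longrightarrow>
          \<not> (\<exists>c. \<forall>xs. length xs = n \<and> (\<forall>i<n. xs ! i \<in> As i) \<longrightarrow> F b xs = c)"
    by (elim bchoice[THEN exE]) blast
  define pos where "pos xs = (LEAST j. j < Suc n \<and> (\<forall>i<Suc n. (xs ! i, xs ! j) \<in> r))" for xs :: "'b list"
  define dl where "dl j xs = take j xs @ drop (Suc j) xs" for j and xs :: "'b list"
  define g where "g xs = pos xs + Suc n * F (xs ! pos xs) (dl (pos xs) xs)" for xs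
  show "\<not> theta_prop (Suc n) Y"
    unfolding theta_prop_def
  proof
    assume "\<forall>f :: 'b list \<Rightarrow> nat. \<exists>As. (\<forall>i<Suc n. As i \<subseteq> Y \<and> infinite (As i)) \<and>
          (\<exists>c. \<forall>xs. length xs = Suc n \<and> (\<forall>i<Suc n. xs ! i \<in> As i) \<longrightarrow> f xs = c)"
    then have "\<exists>As. (\<forall>i<Suc n. As i \<subseteq> Y \<and> infinite (As i)) \<and>
          (\<exists>c. \<forall>xs. length xs = Suc n \<and> (\<forall>i<Suc n. xs ! i \<in> As i) \<longrightarrow> g xs = c)"
      by (rule allE)
    then obtain As c where As0: "\<forall>i<Suc n. As i \<subseteq> Y \<and> infinite (As i)"
      and c0: "\<forall>xs. length xs = Suc n \<and> (\<forall>i<Suc n. xs ! i \<in> As i) \<longrightarrow> g xs = c"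
      by (elim exE conjE)
    have As: "As i \<subseteq> Y \<and> infinite (As i)" if "i < Suc n" for i
      using As0 that by blast
    have c: "g xs = c" if "length xs = Suc n" "\<forall>i<Suc n. xs ! i \<in> As i" for xs
      using c0 that by blast
    have posP: "pos xs < Suc n \<and> (\<forall>i<Suc n. (xs ! i, xs ! pos xs) \<in> r)"
      if L: "length xs = Suc n" and I: "\<forall>i<Suc n. xs ! i \<in> As i" for xs
    proof -
      have "set xs \<subseteq> Field r" using L I As Fr by (fastforce simp: in_set_conv_nth)
      moreover have "set xs \<noteq> {}" using L by auto
      ultimately obtain m where m: "m \<in> set xs" "\<forall>x\<in>set xs. (x, m) \<in> r"
        using wo_max[OF wo] by blast
      then obtain j0 where j0: "j0 < Suc n" "xs ! j0 = m" using L by (auto simp: in_set_conv_nth)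
      have "\<forall>i<Suc n. (xs ! i, xs ! j0) \<in> r"
      proof (intro allI impI)
        fix i assume "i < Suc n"
        then have "xs ! i \<in> set xs" using L by simp
        then show "(xs ! i, xs ! j0) \<in> r" using m j0 by simp
      qed
      then have "\<exists>j. j < Suc n \<and> (\<forall>i<Suc n. (xs ! i, xs ! j) \<in> r)"
        using j0 by blast
      then show ?thesis unfolding pos_def by (rule LeastI_ex)
    qed
    define j where "j = c mod Suc n"
    have posj: "pos xs = j"
      if "length xs = Suc n" "\<forall>i<Suc n. xs ! i \<in> As i" for xs
    proof -
      have "pos xs + Suc n * F (xs ! pos xs) (dl (pos xs) xs) = c"
        using c[OF that] by (simp only: g_def)
      then have "c mod Suc n = pos xs mod Suc n" by (metis mod_mult_self2 mult.commute)
      then show ?thesis using posP[OF that] j_def by simp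
    qed
    have j: "j < Suc n" unfolding j_def by simp
    define pick where "pick k = (SOME x. x \<in> As k)" for k
    have pick: "pick k \<in> As k" if "k < Suc n" for k
      using As[OF that] infinite_imp_nonempty unfolding pick_def by (metis some_in_eq)
    obtain b0 b where bb: "b0 \<in> As j" "b \<in> As j" "b0 \<noteq> b" "(b0, b) \<in> r"
    proof -
      obtain x where x: "x \<in> As j" using As[OF j] infinite_imp_nonempty by blast
      have "infinite (As j - {x})" using As[OF j] by simp
      then obtain y where y: "y \<in> As j - {x}" using infinite_imp_nonempty by blast
      have "x \<in> Field r" "y \<in> Field r" using x y As[OF j] Fr by auto
      then have "(x, y) \<in> r \<or> (y, x) \<in> r" using wo_rel.TOTALS[OF wo] by blast
      then show ?thesis using that x y by blast
    qed
    have below: "As i \<subseteq> underS r b" if "i < Suc n" "i \<noteq> j" for i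
    proof
      fix a assume a: "a \<in> As i"
      define xs where "xs = map (\<lambda>k. if k = i then a else if k = j then b0 else pick k) [0..<Suc n]"
      have xl: "length xs = Suc n" unfolding xs_def by simp
      have xin: "\<forall>k<Suc n. xs ! k \<in> As k" using a bb pick unfolding xs_def
        by (auto simp del: upt_Suc)
      have "(xs ! i, xs ! pos xs) \<in> r" using posP[OF xl xin] that by blast
      then have "(a, b0) \<in> r" using posj[OF xl xin] that j unfolding xs_def
        by (simp del: upt_Suc)
      then have ab: "(a, b) \<in> r" using bb wo_rel.TRANS[OF wo] unfolding trans_def by blast
      have "a \<noteq> b"
      proof
        assume "a = b"
        then have "(b, b0) \<in> r" using \<open>(a, b0) \<in> r\<close> by simp
        then show False using bb wo_rel.ANTISYM[OF wo] unfolding antisym_def by blast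
      qed
      then show "a \<in> underS r b" using ab unfolding underS_def by blast
    qed
    define Bs where "Bs k = As (if k < j then k else Suc k)" for k
    have Bs: "\<forall>k<n. Bs k \<subseteq> underS r b \<and> infinite (Bs k)"
    proof (intro allI impI)
      fix k assume "k < n"
      have "(if k < j then k else Suc k) < Suc n" "(if k < j then k else Suc k) \<noteq> j"
        using \<open>k < n\<close> by auto
      then show "Bs k \<subseteq> underS r b \<and> infinite (Bs k)"
        unfolding Bs_def using below As by blast
    qed
    have "\<forall>ys. length ys = n \<and> (\<forall>k<n. ys ! k \<in> Bs k) \<longrightarrow> F b ys = c div Suc n"
    proof (intro allI impI)
      fix ys :: "'b list" assume ys: "length ys = n \<and> (\<forall>k<n. ys ! k \<in> Bs k)"
      define xs where "xs = take j ys @ b # drop j ys"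
      have jn: "j \<le> n" using j by simp
      have xl: "length xs = Suc n" unfolding xs_def using ys jn by simp
      have xnth: "xs ! k = (if k < j then ys ! k else if k = j then b else ys ! (k - 1))"
        if "k < Suc n" for k
        using that ys jn unfolding xs_def
        by (auto simp: nth_append min_def nth_Cons' not_less)
      have xin: "\<forall>k<Suc n. xs ! k \<in> As k"
      proof (intro allI impI)
        fix k assume k: "k < Suc n"
        consider "k < j" | "k = j" | "k > j" by arith
        then show "xs ! k \<in> As k"
        proof cases
          case 1
          then have "k < n" using j by simp
          then have "ys ! k \<in> As k" using ys 1 unfolding Bs_def by auto
          then show ?thesis using xnth[OF k] 1 by simp
        next
          case 2 then show ?thesis using xnth[OF k] bb by simp
        next
          case 3
          then have "k - 1 < n" "\<not> (k - 1 < j)" "Suc (k - 1) = k" using k by auto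
          then show ?thesis using xnth[OF k] ys 3 unfolding Bs_def by (metis not_less_iff_gr_or_eq)
        qed
      qed
      have pj: "pos xs = j" using posj[OF xl xin] .
      have xj: "xs ! j = b" using xnth[OF j] by simp
      have dlx: "dl j xs = ys" unfolding dl_def xs_def using ys jn by simp
      have "g xs = c" using c xl xin by blast
      then have "j + Suc n * F b ys = c" unfolding g_def pj xj dlx .
      moreover have "(j + Suc n * F b ys) div Suc n = F b ys" using j
        by (metis add.commute div_less div_mult_self2 nat.distinct(1) plus_nat.add_0 mult.commute)
      ultimately show "F b ys = c div Suc n" by simp
    qed
    moreover have "b \<in> Y" using bb As[OF j] by blast
    ultimately show False using F[THEN bspec, OF \<open>b \<in> Y\<close>, THEN spec, of Bs, THEN mp, OF Bs] by blast
  qed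
qed

end
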